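(* For all positive integers $n$ and $j$, $R_n(j)=A_n(10j)$.
   Context: The continued fraction $[a_1;a_2:\dots:a_k]$ means $a_1+1/(a_2+1/(\cdots+1/a_k))$. For a sequence $(a_1,\dots,a_k)$ of positive integers with $k\ge2$, $\breve K(a_1,\dots,a_k)$ is the integer $c$ where $[a_1;a_2:\dots:a_{k-1}]=c/d$ with $\gcd(c,d)=1$, $c,d>0$ (the last entry $a_k$ is omitted). For a positive integer $n$ let $a_n=n^2+3$, $b_n=n^4+5n^2+5$, $r_n=(nb_n)^2+2$. Define $R_n(1)=\breve K(na_n,na_n,nb_n,nb_n)$, $R_n(2)=\breve K(na_n,na_n,nb_n,nb_n,nb_n,nb_n)$, and $R_n(j)=r_nR_n(j-1)-R_n(j-2)$ for $j>2$. Define $A_n(1)=1$, $A_n(2)=n(n^2+4)$, and $A_n(j)=nA_n(j-1)+A_n(j-2)$ for $j>2$. *)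

theory Defs
  imports Complex_Main
begin

fun cf :: "int list \<Rightarrow> rat" where
  "cf [] = 0"
| "cf [a] = of_int a"
| "cf (a # b # xs) = of_int a + 1 / cf (b # xs)"

definition Kbreve :: "int list \<Rightarrow> int" where
  "Kbreve as = fst (quotient_of (cf (butlast as)))"

definition a_seq :: "int \<Rightarrow> int" where "a_seq n = n^2 + 3"
definition b_seq :: "int \<Rightarrow> int" where "b_seq n = n^4 + 5*n^2 + 5"
definition r_seq :: "int \<Rightarrow> int" where "r_seq n = (n * b_seq n)^2 + 2"

fun R :: "int \<Rightarrow> nat \<Rightarrow> int" where
  "R n 0 = 0"
| "R n (Suc 0) = Kbreve [n * a_seq n, n * a_seq n, n * b_seq n, n * b_seq n]"
| "R n (Suc (Suc 0)) = Kbreve [n * a_seq n, n * a_seq n, n * b_seq n, n * b_seq n,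
                                n * b_seq n, n * b_seq n]"
| "R n (Suc (Suc (Suc j))) = r_seq n * R n (Suc (Suc j)) - R n (Suc j)"

fun A :: "int \<Rightarrow> nat \<Rightarrow> int" where
  "A n 0 = 0"
| "A n (Suc 0) = 1"
| "A n (Suc (Suc 0)) = n * (n^2 + 4)"
| "A n (Suc (Suc (Suc j))) = n * A n (Suc (Suc j)) + A n (Suc j)"

end

theory Submission
  imports Defs
begin

fun cfpq :: "int list \<Rightarrow> int \<times> int" where
  "cfpq [] = (0,1)"
| "cfpq [a] = (a, 1)"
| "cfpq (a # b # xs) = (let (p,q) = cfpq (b # xs) in (a*p+q, p))"

lemma cfpq_correct:
  "xs \<noteq> [] \<Longrightarrow> (\<forall>x\<in>set xs. x > 0) \<Longrightarrow>
   cf xs = of_int (fst (cfpq xs)) / of_int (snd (cfpq xs)) \<and> fst (cfpq xs) > 0 \<and> snd (cfpq xs) > 0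
   \<and> coprime (fst (cfpq xs)) (snd (cfpq xs))"
proof (induction xs rule: cfpq.induct)
  case (3 a b xs)
  obtain p q where pq: "cfpq (b#xs) = (p,q)" by fastforce
  from 3 pq have ih: "cf (b#xs) = of_int p / of_int q" "p > 0" "q > 0" "coprime p q" by auto
  have a: "a > 0" using 3 by auto
  have "cf (a#b#xs) = of_int (a*p+q) / of_int p"
    using ih a by (simp only: cf.simps ih(1)) (simp add: field_simps)
  moreover have "coprime (a*p+q) p" using ih(4)
    by (metis gcd_add_mult coprime_iff_gcd_eq_1 gcd.commute)
  ultimately show ?case using pq ih a by (simp add: pos_add_strict)
qed auto

lemma quot: "q > 0 \<Longrightarrow> coprime p q \<Longrightarrow> quotient_of (of_int p / of_int q) = (p, q)"
  by (simp add: Fract_of_int_quotient[symmetric] quotient_of_Fract normalize_def)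

lemma Kbreve_cfpq:
  assumes "butlast xs \<noteq> []" "\<forall>x\<in>set (butlast xs). x > 0"
  shows "Kbreve xs = fst (cfpq (butlast xs))"
proof -
  from cfpq_correct[OF assms] show ?thesis
    unfolding Kbreve_def by (metis quot fst_conv)
qed

lemma b1: "A n 21 = r_seq n * A n 11 - A n 1"
  by (simp add: eval_nat_numeral r_seq_def b_seq_def) algebra
lemma b2: "A n 22 = r_seq n * A n 12 - A n 2"
  by (simp add: eval_nat_numeral r_seq_def b_seq_def) algebra

lemma A_rec: "A n (k+3) = n * A n (k+2) + A n (k+1)"
proof -
  have "k+3 = Suc(Suc(Suc k))" "k+2 = Suc(Suc k)" "k+1 = Suc k" by simp_all
  thus ?thesis by (simp only: A.simps(4))
qed

lemma A_shift_pair: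
  "A n (m+21) = r_seq n * A n (m+11) - A n (m+1) \<and>
   A n (m+22) = r_seq n * A n (m+12) - A n (m+2)"
proof (induction m)
  case 0 show ?case using b1[of n] b2[of n] by (simp only: add_0)
next
  case (Suc m)
  have e1: "A n (m+23) = n * A n (m+22) + A n (m+21)" using A_rec[of n "m+20"] by (simp add: add.commute)
  have e2: "A n (m+13) = n * A n (m+12) + A n (m+11)" using A_rec[of n "m+10"] by (simp add: add.commute)
  have e3: "A n (m+3) = n * A n (m+2) + A n (m+1)" using A_rec[of n "m+0"] by (simp add: add.commute)
  have "A n (m+23) = r_seq n * A n (m+13) - A n (m+3)"
  proof -
    have i1: "A n (m+21) = r_seq n * A n (m+11) - A n (m+1)"
      and i2: "A n (m+22) = r_seq n * A n (m+12) - A n (m+2)" using Suc by simp_all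
    show ?thesis by (simp only: e1 e2 e3 i1 i2) (simp add: algebra_simps)
  qed
  then show ?case using Suc e3 by (simp add: add.commute add.left_commute)
qed

lemma A_shift: "m \<ge> 1 \<Longrightarrow> A n (m+20) = r_seq n * A n (m+10) - A n m"
  using A_shift_pair[of n "m-1"] by (simp add: add.commute add.left_commute)

lemma R1: "n \<ge> 1 \<Longrightarrow> R n 1 = A n 10"
proof -
  assume n: "n \<ge> 1"
  have pos: "n * a_seq n > 0" "n * b_seq n > 0" using n
    by (auto simp: a_seq_def b_seq_def add_pos_nonneg)
  have "R n 1 = fst (cfpq [n * a_seq n, n * a_seq n, n * b_seq n])"
    using Kbreve_cfpq[of "[n * a_seq n, n * a_seq n, n * b_seq n, n * b_seq n]"] pos by simp
  also have "\<dots> = A n 10"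
    by (simp add: eval_nat_numeral a_seq_def b_seq_def) algebra
  finally show ?thesis .
qed

lemma R2: "n \<ge> 1 \<Longrightarrow> R n 2 = A n 20"
proof -
  assume n: "n \<ge> 1"
  have pos: "n * a_seq n > 0" "n * b_seq n > 0" using n
    by (auto simp: a_seq_def b_seq_def add_pos_nonneg)
  have "R n 2 = fst (cfpq [n * a_seq n, n * a_seq n, n * b_seq n, n * b_seq n, n * b_seq n])"
    using Kbreve_cfpq[of "[n * a_seq n, n * a_seq n, n * b_seq n, n * b_seq n, n * b_seq n, n * b_seq n]"] pos
    by (simp add: numeral_2_eq_2)
  also have "\<dots> = A n 20"
    by (simp add: eval_nat_numeral a_seq_def b_seq_def) algebra
  finally show ?thesis .
qed

lemma R_all: "n \<ge> 1 \<Longrightarrow> R n (Suc j) = A n (10 * Suc j) \<and> R n (Suc (Suc j)) = A n (10 * Suc (Suc j))"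
proof (induction j)
  case 0 then show ?case using R1 R2 by (simp add: numeral_2_eq_2[symmetric])
next
  case (Suc j)
  then have ih: "R n (Suc j) = A n (10 * Suc j)" "R n (Suc (Suc j)) = A n (10 * Suc (Suc j))" by auto
  have "R n (Suc (Suc (Suc j))) = r_seq n * A n (10 * Suc (Suc j)) - A n (10 * Suc j)"
    using ih by simp
  also have "\<dots> = A n (10 * Suc j + 20)"
    using A_shift[of "10 * Suc j" n] by (simp add: algebra_simps)
  finally show ?case using ih by (simp add: algebra_simps)
qed

theorem lemma4:
  fixes n :: int and j :: nat
  assumes "n \<ge> 1" and "j \<ge> 1"
  shows "R n j = A n (10 * j)"
proof -
  obtain k where "j = Suc k" using assms(2) by (cases j) auto
  then show ?thesis using R_all[OF assms(1), of k] by simp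
qed

end
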